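(* Let $c>2$ be a real number. Suppose that every separating, union-closed finite collection of sets $\mathcal{A}$ containing at least one non-empty set and satisfying $|\mathcal{A}|\le c\cdot|U(\mathcal{A})|$ has an element of $U(\mathcal{A})$ belonging to at least half of the sets in $\mathcal{A}$. Then for every union-closed finite collection of sets $\mathcal{B}$ containing at least one non-empty set, there exists $x\in U(\mathcal{B})$ with $|x|_{\mathcal{B}}\ge \frac{c-2}{2(c-1)}\cdot|\mathcal{B}|$.
   Context: A collection $\mathcal{A}$ of sets is union-closed if $S,T\in\mathcal{A}$ implies $S\cup T\in\mathcal{A}$. The universe $U(\mathcal{A})$ is $\bigcup_{A\in\mathcal{A}}A$. $\mathcal{A}$ is separating if for any two distinct elements of $U(\mathcal{A})$ there is a set in $\mathcal{A}$ containing one of them but not the other. For an element $x$, $|x|_{\mathcal{B}}$ denotes the number of sets in $\mathcal{B}$ containing $x$. *)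

theory Defs
  imports Main Complex_Main
begin

definition union_closed :: "'a set set \<Rightarrow> bool" where
  "union_closed \<A> \<longleftrightarrow> (\<forall>S\<in>\<A>. \<forall>T\<in>\<A>. S \<union> T \<in> \<A>)"

definition universe :: "'a set set \<Rightarrow> 'a set" where
  "universe \<A> = \<Union>\<A>"

definition separating :: "'a set set \<Rightarrow> bool" where
  "separating \<A> \<longleftrightarrow>
     (\<forall>x\<in>universe \<A>. \<forall>y\<in>universe \<A>. x \<noteq> y \<longrightarrow>
        (\<exists>A\<in>\<A>. (x \<in> A \<and> y \<notin> A) \<or> (y \<in> A \<and> x \<notin> A)))"

definition freq :: "'a \<Rightarrow> 'a set set \<Rightarrow> nat" where
  "freq x \<B> = card {B \<in> \<B>. x \<in> B}"

end

theory Submission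
  imports Defs
begin

theorem theorem2:
  fixes c :: real and \<B> :: "'a set set"
  assumes "c > 2"
    and hyp: "\<And>\<A> :: nat set set.
               finite \<A> \<Longrightarrow> union_closed \<A> \<Longrightarrow> separating \<A> \<Longrightarrow>
               (\<exists>A\<in>\<A>. A \<noteq> {}) \<Longrightarrow>
               real (card \<A>) \<le> c * real (card (universe \<A>)) \<Longrightarrow>
               (\<exists>x\<in>universe \<A>. 2 * freq x \<A> \<ge> card \<A>)"
    and "finite \<B>" and "union_closed \<B>" and "\<exists>B\<in>\<B>. B \<noteq> {}"
  shows "\<exists>x\<in>universe \<B>. real (freq x \<B>) \<ge> (c - 2) / (2 * (c - 1)) * real (card \<B>)"
proof -
  note fin = \<open>finite \<B>\<close> and uc = \<open>union_closed \<B>\<close>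
  define U where "U = \<Union>\<B>"
  define tp where "tp x = {B\<in>\<B>. x\<in>B}" for x
  define T where "T = tp ` U"
  have finT: "finite T" unfolding T_def tp_def
    by (rule finite_subset[of _ "Pow \<B>"]) (use fin in auto)
  define N where "N = card T"
  obtain g where g: "bij_betw g T {0..<N}"
    using ex_bij_betw_finite_nat[OF finT] N_def by blast
  define \<phi> where "\<phi> x = g (tp x)" for x
  have inj_g: "inj_on g T" using g bij_betw_def by blast
  have K: "x \<in> B \<longleftrightarrow> y \<in> B" if "x \<in> U" "y \<in> U" "B \<in> \<B>" "\<phi> x = \<phi> y" for x y B
  proof -
    have "tp x = tp y" using inj_g that unfolding \<phi>_def T_def
      by (meson image_eqI inj_on_contraD)
    then show ?thesis using that(3) unfolding tp_def by blast
  qed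
  have BU: "B \<subseteq> U" if "B \<in> \<B>" for B using that U_def by blast
  have K2: "\<phi> x \<in> \<phi> ` B \<longleftrightarrow> x \<in> B" if "x \<in> U" "B \<in> \<B>" for x B
  proof
    assume "\<phi> x \<in> \<phi> ` B"
    then obtain y where "y \<in> B" "\<phi> x = \<phi> y" by auto
    then show "x \<in> B" using K[of x y B] that BU by blast
  qed auto
  have phiU: "\<phi> ` U = {0..<N}"
  proof -
    have "\<phi> ` U = g ` T" unfolding \<phi>_def T_def by auto
    then show ?thesis using g by (simp add: bij_betw_def)
  qed
  have imgsub: "\<phi> ` B \<subseteq> {..<N}" if "B \<in> \<B>" for B
  proof -
    have "\<phi> ` B \<subseteq> \<phi> ` U" using BU[OF that] by (rule image_mono)
    then show ?thesis using phiU by auto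
  qed
  obtain B0 where B0: "B0 \<in> \<B>" "B0 \<noteq> {}" using assms(5) by blast
  have "U \<noteq> {}" using B0 U_def by blast
  then have "{0..<N} \<noteq> {}" using phiU by auto
  then have N1: "N \<ge> 1" by simp
  define m where "m = card \<B>"
  have "\<B> \<noteq> {}" using B0 by auto
  then have m1: "m \<ge> 1" using fin unfolding m_def by (simp add: card_gt_0_iff Suc_le_eq)
  define k where "k = nat \<lfloor>real m / (c - 1)\<rfloor>"
  have c1: "c - 1 > 1" using assms(1) by simp
  have kle: "real k \<le> real m / (c - 1)"
  proof -
    have "0 \<le> real m / (c - 1)" using c1 by simp
    then show ?thesis unfolding k_def by linarith
  qed
  have kgt: "real k > real m / (c - 1) - 1"
  proof -
    have "0 \<le> real m / (c - 1)" using c1 by simp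
    then show ?thesis unfolding k_def by linarith
  qed
  have km: "k < m"
  proof -
    have "real m / (c - 1) < real m" using c1 m1
      by (simp add: divide_less_eq)
    then show ?thesis using kle by linarith
  qed
  define I where "I = (\<lambda>B. \<phi> ` B) ` \<B>"
  define C where "C = (\<lambda>a. {..a}) ` {N..<N+k}"
  define \<A> where "\<A> = I \<union> C"
  have finA: "finite \<A>" unfolding \<A>_def I_def C_def using fin by simp
  have ucA: "union_closed \<A>"
    unfolding union_closed_def
  proof (intro ballI)
    fix S T assume S: "S \<in> \<A>" and T: "T \<in> \<A>"
    show "S \<union> T \<in> \<A>"
    proof (cases "S \<in> I")
      case True
      then obtain S' where S': "S' \<in> \<B>" "S = \<phi> ` S'" unfolding I_def by auto
      show ?thesis
      proof (cases "T \<in> I")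
        case True
        then obtain T' where T': "T' \<in> \<B>" "T = \<phi> ` T'" unfolding I_def by auto
        have "S' \<union> T' \<in> \<B>" using uc S' T' unfolding union_closed_def by blast
        then have "\<phi> ` (S' \<union> T') \<in> I" unfolding I_def by (rule imageI)
        then show ?thesis using S' T' unfolding \<A>_def by (simp add: image_Un)
      next
        case False
        then obtain a where a: "a \<in> {N..<N+k}" "T = {..a}" using T unfolding \<A>_def C_def by auto
        have "S \<subseteq> {..a}" using imgsub[OF S'(1)] S'(2) a(1) by auto
        then have "S \<union> T = T" using a by auto
        then show ?thesis using T by simp
      qed
    next
      case False
      then obtain a where a: "a \<in> {N..<N+k}" "S = {..a}" using S unfolding \<A>_def C_def by auto
      show ?thesis
      proof (cases "T \<in> I")
        case True
        then obtain T' where T': "T' \<in> \<B>" "T = \<phi> ` T'" unfolding I_def by auto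
        have "T \<subseteq> {..a}" using imgsub[OF T'(1)] T'(2) a(1) by auto
        then have "S \<union> T = S" using a by auto
        then show ?thesis using S by simp
      next
        case False
        then obtain b where b: "b \<in> {N..<N+k}" "T = {..b}" using T unfolding \<A>_def C_def by auto
        have "S \<union> T = {..max a b}" using a b by (auto simp: max_def)
        moreover have "max a b \<in> {N..<N+k}" using a b by (auto simp: max_def)
        ultimately show ?thesis unfolding \<A>_def C_def by blast
      qed
    qed
  qed
  have univA: "universe \<A> = {..<N+k}"
  proof
    show "universe \<A> \<subseteq> {..<N+k}"
    proof
      fix x assume "x \<in> universe \<A>"
      then obtain S where S: "S \<in> \<A>" "x \<in> S" unfolding universe_def by auto
      show "x \<in> {..<N+k}"
      proof (cases "S \<in> I")
        case True
        then obtain B where B: "B \<in> \<B>" "S = \<phi> ` B" unfolding I_def by auto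
        then have "x < N" using imgsub[OF B(1)] S(2) by auto
        then show ?thesis by simp
      next
        case False
        then show ?thesis using S unfolding \<A>_def C_def by auto
      qed
    qed
  next
    show "{..<N+k} \<subseteq> universe \<A>"
    proof
      fix x assume x: "x \<in> {..<N+k}"
      show "x \<in> universe \<A>"
      proof (cases "x < N")
        case True
        then obtain u where u: "u \<in> U" "x = \<phi> u" using phiU by (metis atLeastLessThan_iff imageE zero_le)
        then obtain B where "B \<in> \<B>" "u \<in> B" using U_def by auto
        then have "\<phi> ` B \<in> \<A>" "x \<in> \<phi> ` B" using u unfolding \<A>_def I_def by auto
        then show ?thesis unfolding universe_def by blast
      next
        case False
        then have "x \<in> {N..<N+k}" using x by simp
        then have "{..x} \<in> C" unfolding C_def by (rule imageI)
        then have "{..x} \<in> \<A>" unfolding \<A>_def by simp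
        then show ?thesis unfolding universe_def by blast
      qed
    qed
  qed
  have sepA: "separating \<A>"
  proof -
    have L: "\<exists>A\<in>\<A>. (x \<in> A \<and> y \<notin> A) \<or> (y \<in> A \<and> x \<notin> A)"
      if xy0: "x < N+k" "y < N+k" "x < y" for x y
    proof (cases "y < N")
      case True
      then obtain u where u: "u \<in> U" "x = \<phi> u" using phiU xy0(3)
        by (metis atLeastLessThan_iff imageE zero_le order.strict_trans)
      obtain v where v: "v \<in> U" "y = \<phi> v" using phiU True
        by (metis atLeastLessThan_iff imageE zero_le)
      have "tp u \<noteq> tp v" using u v xy0(3) unfolding \<phi>_def by auto
      then obtain B where B: "B \<in> \<B>" "(u \<in> B \<and> v \<notin> B) \<or> (v \<in> B \<and> u \<notin> B)"
        unfolding tp_def by blast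
      have "\<phi> ` B \<in> \<A>" using B unfolding \<A>_def I_def by auto
      moreover have "(x \<in> \<phi> ` B \<and> y \<notin> \<phi> ` B) \<or> (y \<in> \<phi> ` B \<and> x \<notin> \<phi> ` B)"
        using B(2) unfolding u(2) v(2) K2[OF u(1) B(1)] K2[OF v(1) B(1)] .
      ultimately show ?thesis by blast
    next
      case False
      show ?thesis
      proof (cases "x < N")
        case True
        then obtain u where u: "u \<in> U" "x = \<phi> u" using phiU
          by (metis atLeastLessThan_iff imageE zero_le)
        then obtain B where B: "B \<in> \<B>" "u \<in> B" using U_def by auto
        have "\<phi> ` B \<in> \<A>" using B unfolding \<A>_def I_def by auto
        moreover have "x \<in> \<phi> ` B" using B u by auto
        moreover have "y \<notin> \<phi> ` B" using imgsub[OF B(1)] False by auto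
        ultimately show ?thesis by blast
      next
        case False
        then have "x \<in> {N..<N+k}" using xy0 by simp
        then have "{..x} \<in> C" unfolding C_def by (rule imageI)
        then have "{..x} \<in> \<A>" unfolding \<A>_def by simp
        moreover have "x \<in> {..x}" "y \<notin> {..x}" using xy0 by auto
        ultimately show ?thesis by blast
      qed
    qed
    show ?thesis unfolding separating_def univA
    proof (intro ballI impI)
      fix x y assume xy: "x \<in> {..<N+k}" "y \<in> {..<N+k}" "x \<noteq> y"
      show "\<exists>A\<in>\<A>. (x \<in> A \<and> y \<notin> A) \<or> (y \<in> A \<and> x \<notin> A)"
      proof (cases "x < y")
        case True then show ?thesis using L xy by auto
      next
        case False then have "y < x" using xy by auto
        then show ?thesis using L[of y x] xy by auto
      qed
    qed
  qed
  have neA: "\<exists>A\<in>\<A>. A \<noteq> {}"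
    using B0 unfolding \<A>_def I_def by auto
  have injI: "inj_on (\<lambda>B. \<phi> ` B) \<B>"
  proof (rule inj_onI)
    fix S T assume S: "S \<in> \<B>" and T: "T \<in> \<B>" and eq: "\<phi> ` S = \<phi> ` T"
    show "S = T"
    proof
      show "S \<subseteq> T" using K2 S T eq BU by (metis subset_eq image_eqI)
      show "T \<subseteq> S" using K2 S T eq BU by (metis subset_eq image_eqI)
    qed
  qed
  have cardI: "card I = m" unfolding I_def m_def using injI card_image by blast
  have injC: "inj_on (\<lambda>a::nat. {..a}) {N..<N+k}" by (rule inj_onI) (metis atMost_eq_iff)
  have cardC: "card C = k" unfolding C_def using card_image[OF injC] by simp
  have disj: "I \<inter> C = {}"
  proof -
    have "N \<notin> S" if "S \<in> I" for S using that imgsub unfolding I_def by auto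
    moreover have "N \<in> S" if "S \<in> C" for S using that unfolding C_def by auto
    ultimately show ?thesis by blast
  qed
  have finI: "finite I" and finC: "finite C" unfolding I_def C_def using fin by auto
  have cardA: "card \<A> = m + k" unfolding \<A>_def
    using card_Un_disjoint[OF finI finC disj] cardI cardC by simp
  have size: "real (card \<A>) \<le> c * real (card (universe \<A>))"
  proof -
    have "real m - real N * c \<le> (c - 1) * real k"
    proof -
      have "(c - 1) * real k > (c-1) * (real m / (c - 1) - 1)"
        using kgt c1 by (intro mult_strict_left_mono) auto
      also have "(c-1) * (real m / (c - 1) - 1) = real m - (c - 1)" using c1 by (simp add: field_simps)
      finally have "(c - 1) * real k > real m - (c - 1)" .
      moreover have "real N * c \<ge> c" using N1 assms(1) by simp
      ultimately show ?thesis by linarith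
    qed
    then show ?thesis using cardA univA by (simp add: algebra_simps)
  qed
  obtain x where x: "x \<in> universe \<A>" "2 * freq x \<A> \<ge> card \<A>"
    using hyp[OF finA ucA sepA neA size] by blast
  have fsplit: "freq x \<A> = card {S\<in>I. x\<in>S} + card {S\<in>C. x\<in>S}"
  proof -
    have "{S\<in>\<A>. x\<in>S} = {S\<in>I. x\<in>S} \<union> {S\<in>C. x\<in>S}" unfolding \<A>_def by auto
    then show ?thesis unfolding freq_def using disj finI finC
      by (simp add: card_Un_disjoint disjoint_iff)
  qed
  show ?thesis
  proof (cases "x < N")
    case False
    have "x \<notin> S" if SI: "S \<in> I" for S
    proof -
      obtain B where B: "B \<in> \<B>" "S = \<phi> ` B" using SI unfolding I_def by auto
      show ?thesis using imgsub[OF B(1)] B(2) False by auto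
    qed
    then have e: "{S\<in>I. x\<in>S} = {}" by auto
    have cc: "card {S\<in>C. x\<in>S} \<le> card C" by (rule card_mono[OF finC]) auto
    have "freq x \<A> \<le> k" using fsplit cardC cc unfolding e by simp
    then have False using x(2) cardA km by simp
    then show ?thesis ..
  next
    case True
    then obtain u where u: "u \<in> U" "x = \<phi> u" using phiU
      by (metis atLeastLessThan_iff imageE zero_le)
    have eqI: "{S\<in>I. x\<in>S} = (\<lambda>B. \<phi> ` B) ` {B\<in>\<B>. u\<in>B}"
      using K2[OF u(1)] u unfolding I_def by auto
    have c1': "card {S\<in>I. x\<in>S} = freq u \<B>"
    proof -
      have "inj_on (\<lambda>B. \<phi> ` B) {B\<in>\<B>. u\<in>B}" by (rule inj_on_subset[OF injI]) auto
      then have "card ((\<lambda>B. \<phi> ` B) ` {B\<in>\<B>. u\<in>B}) = card {B\<in>\<B>. u\<in>B}" by (rule card_image)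
      then show ?thesis using eqI by (simp add: freq_def)
    qed
    have "{S\<in>C. x\<in>S} = C" using True unfolding C_def by auto
    then have "freq x \<A> = freq u \<B> + k" using fsplit c1' cardC by simp
    then have ineq: "2 * real (freq u \<B>) \<ge> real m - real k" using x(2) cardA by simp
    have "(c - 2) / (2 * (c - 1)) * real m = (real m - real m / (c - 1)) / 2"
      using c1 by (simp add: field_simps)
    also have "\<dots> \<le> real (freq u \<B>)"
    proof -
      have "real m - real m / (c - 1) \<le> 2 * real (freq u \<B>)" using ineq kle by linarith
      then show ?thesis by simp
    qed
    finally have "real (freq u \<B>) \<ge> (c - 2) / (2 * (c - 1)) * real (card \<B>)" using m_def by simp
    moreover have "u \<in> universe \<B>" using u(1) unfolding U_def universe_def .
    ultimately show ?thesis by blast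
  qed
qed

end
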